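(* Let $\mathbf A$ be a WD-algebra, $P$ a prime filter of $\mathbf A$ and $a,b\in A$. Then $a\leftarrow b\in P$ if and only if there exists a prime filter $Q$ of $\mathbf A$ such that $(P,Q)\in S_{\mathbf A}$, $a\in Q$ and $b\notin Q$.
   Context: A WD-algebra is an algebra $(A,\wedge,\vee,\leftarrow,0,1)$ such that $(A,\wedge,\vee,0,1)$ is a bounded distributive lattice and for all $a,b,c\in A$: $a\leftarrow a=0$; $(a\vee b)\leftarrow c=(a\leftarrow c)\vee(b\leftarrow c)$; $a\leftarrow(b\wedge c)=(a\leftarrow b)\vee(a\leftarrow c)$; $a\leftarrow c\le(a\leftarrow b)\vee(b\leftarrow c)$. For a prime filter $P$ and a filter $Q$ of $\mathbf A$, $(P,Q)\in S_{\mathbf A}$ iff for all $a,b\in A$, $a\in Q$ and $b\notin Q$ imply $a\leftarrow b\in P$. *)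

theory Defs
  imports Main
begin

text \<open>WD-algebras: bounded distributive lattices with a binary operation
  (written \<open>a \<leftarrow> b\<close> in the paper, here \<open>wsub a b\<close>) satisfying the four axioms.\<close>

class wd_algebra = bounded_lattice + distrib_lattice +
  fixes wsub :: "'a \<Rightarrow> 'a \<Rightarrow> 'a"
  assumes wsub_self: "wsub a a = bot"
    and wsub_sup_left: "wsub (sup a b) c = sup (wsub a c) (wsub b c)"
    and wsub_inf_right: "wsub a (inf b c) = sup (wsub a b) (wsub a c)"
    and wsub_trans: "wsub a c \<le> sup (wsub a b) (wsub b c)"

definition is_filter :: "'a::bounded_lattice set \<Rightarrow> bool" where
  "is_filter F \<longleftrightarrow> top \<in> F \<and>
     (\<forall>a b. a \<in> F \<and> a \<le> b \<longrightarrow> b \<in> F) \<and>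
     (\<forall>a b. a \<in> F \<and> b \<in> F \<longrightarrow> inf a b \<in> F)"

definition is_prime_filter :: "'a::bounded_lattice set \<Rightarrow> bool" where
  "is_prime_filter P \<longleftrightarrow> is_filter P \<and> bot \<notin> P \<and>
     (\<forall>a b. sup a b \<in> P \<longrightarrow> a \<in> P \<or> b \<in> P)"

definition S_rel :: "'a::wd_algebra set \<Rightarrow> 'a set \<Rightarrow> bool" where
  "S_rel P Q \<longleftrightarrow> is_prime_filter P \<and> is_filter Q \<and>
     (\<forall>a b. a \<in> Q \<and> b \<notin> Q \<longrightarrow> wsub a b \<in> P)"

end

theory Submission
  imports Defs
begin

lemma wsub_mono_left:
  fixes x :: "'a::wd_algebra"
  assumes "x \<le> x'" shows "wsub x c \<le> wsub x' c"
proof -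
  have "wsub x' c = wsub (sup x x') c" using assms by (simp add: sup_absorb2)
  also have "\<dots> = sup (wsub x c) (wsub x' c)" by (rule wsub_sup_left)
  finally show ?thesis by (metis sup.cobounded1)
qed

lemma wsub_anti_right:
  fixes a :: "'a::wd_algebra"
  assumes "c \<le> b" shows "wsub a b \<le> wsub a c"
proof -
  have "wsub a c = wsub a (inf b c)" using assms by (simp add: inf_absorb2)
  also have "\<dots> = sup (wsub a b) (wsub a c)" by (rule wsub_inf_right)
  finally show ?thesis by (metis sup.cobounded1)
qed

lemma wsub_top: "wsub (a::'a::wd_algebra) top = bot"
  using wsub_anti_right[of a top a] wsub_self[of a] by (simp add: bot_unique)

lemma pf_up: "is_prime_filter P \<Longrightarrow> x \<in> P \<Longrightarrow> x \<le> y \<Longrightarrow> y \<in> P"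
  unfolding is_prime_filter_def is_filter_def by blast

lemma pf_bot: "is_prime_filter P \<Longrightarrow> bot \<notin> P"
  unfolding is_prime_filter_def by blast

lemma pf_sup: "is_prime_filter P \<Longrightarrow> sup x y \<in> P \<longleftrightarrow> x \<in> P \<or> y \<in> P"
  unfolding is_prime_filter_def is_filter_def by (metis sup.cobounded1 sup.cobounded2)

lemma trans_F:
  fixes x :: "'a::wd_algebra"
  assumes P: "is_prime_filter P" and "wsub x w \<notin> P" and "wsub w v \<notin> P"
  shows "wsub x v \<notin> P"
  using assms pf_up[OF P _ wsub_trans[of x v w]] pf_sup[OF P] by blast

lemma F_filter:
  fixes x :: "'a::wd_algebra"
  assumes P: "is_prime_filter P"
  shows "is_filter {y. wsub x y \<notin> P}"
  unfolding is_filter_def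
proof (intro conjI allI impI)
  show "top \<in> {y. wsub x y \<notin> P}" using wsub_top[of x] pf_bot[OF P] by auto
next
  fix u v assume "u \<in> {y. wsub x y \<notin> P} \<and> u \<le> v"
  then show "v \<in> {y. wsub x y \<notin> P}" using pf_up[OF P _ wsub_anti_right[of u v x]] by auto
next
  fix u v assume "u \<in> {y. wsub x y \<notin> P} \<and> v \<in> {y. wsub x y \<notin> P}"
  then show "inf u v \<in> {y. wsub x y \<notin> P}" using pf_sup[OF P] wsub_inf_right[of x u v] by auto
qed

theorem corollary3p10:
  fixes P :: "'a::wd_algebra set" and a b :: 'a
  assumes "is_prime_filter P"
  shows "wsub a b \<in> P \<longleftrightarrow>
         (\<exists>Q. is_prime_filter Q \<and> S_rel P Q \<and> a \<in> Q \<and> b \<notin> Q)"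
proof
  assume "\<exists>Q. is_prime_filter Q \<and> S_rel P Q \<and> a \<in> Q \<and> b \<notin> Q"
  then show "wsub a b \<in> P" unfolding S_rel_def by blast
next
  note P = assms
  assume ab: "wsub a b \<in> P"
  define A where "A = {Q. is_filter Q \<and> a \<in> Q \<and> b \<notin> Q \<and>
      (\<forall>x y. x \<in> Q \<and> y \<notin> Q \<longrightarrow> wsub x y \<in> P)}"
  define F where "F x = {y. wsub x y \<notin> P}" for x
  have Ffil: "is_filter (F x)" for x unfolding F_def by (rule F_filter[OF P])
  have Fself: "x \<in> F x" for x unfolding F_def using wsub_self[of x] pf_bot[OF P] by auto
  have Fclosed: "wsub w v \<in> P" if "w \<in> F x" "v \<notin> F x" for x w v
    using that trans_F[OF P, of x w v] unfolding F_def by blast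
  have Fanti: "F x' \<subseteq> F x" if "x \<le> x'" for x x'
    unfolding F_def using pf_up[OF P _ wsub_mono_left[OF that]] by blast
  have Q0: "F a \<in> A"
    unfolding A_def using Ffil Fself Fclosed ab unfolding F_def by blast
  have "\<forall>C\<in>chains A. \<exists>U\<in>A. \<forall>X\<in>C. X \<subseteq> U"
  proof
    fix C assume C: "C \<in> chains A"
    show "\<exists>U\<in>A. \<forall>X\<in>C. X \<subseteq> U"
    proof (cases "C = {}")
      case True then show ?thesis using Q0 by blast
    next
      case False
      have CA: "C \<subseteq> A" using chainsD2[OF C] .
      have ch: "X \<subseteq> Y \<or> Y \<subseteq> X" if "X \<in> C" "Y \<in> C" for X Y using chainsD[OF C that] .
      have memA: "is_filter X \<and> a \<in> X \<and> b \<notin> X \<and> (\<forall>x y. x \<in> X \<and> y \<notin> X \<longrightarrow> wsub x y \<in> P)"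
        if "X \<in> C" for X using that CA unfolding A_def by blast
      have Xtop: "top \<in> X" and Xup: "\<And>u v. u \<in> X \<Longrightarrow> u \<le> v \<Longrightarrow> v \<in> X"
        and Xinf: "\<And>u v. u \<in> X \<Longrightarrow> v \<in> X \<Longrightarrow> inf u v \<in> X"
        if "X \<in> C" for X using memA[OF that] unfolding is_filter_def by blast+
      obtain X0 where X0: "X0 \<in> C" using False by blast
      have "is_filter (\<Union>C)"
        unfolding is_filter_def
      proof (intro conjI allI impI)
        show "top \<in> \<Union>C" using X0 Xtop by blast
      next
        fix u v assume "u \<in> \<Union>C \<and> u \<le> v"
        then obtain X where "X \<in> C" "u \<in> X" "u \<le> v" by blast
        then show "v \<in> \<Union>C" using Xup by blast
      next
        fix u v assume uv: "u \<in> \<Union>C \<and> v \<in> \<Union>C"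
        then obtain X Y where X: "X \<in> C" "u \<in> X" and Y: "Y \<in> C" "v \<in> Y" by blast
        show "inf u v \<in> \<Union>C"
        proof (cases "X \<subseteq> Y")
          case True
          then have "inf u v \<in> Y" using X Y Xinf by blast
          then show ?thesis using Y by blast
        next
          case False
          then have "Y \<subseteq> X" using ch X Y by blast
          then have "inf u v \<in> X" using X Y Xinf by blast
          then show ?thesis using X by blast
        qed
      qed
      moreover have "a \<in> \<Union>C" using X0 memA by blast
      moreover have "b \<notin> \<Union>C" using memA by blast
      moreover have "\<forall>x y. x \<in> \<Union>C \<and> y \<notin> \<Union>C \<longrightarrow> wsub x y \<in> P"
      proof (intro allI impI)
        fix x y assume "x \<in> \<Union>C \<and> y \<notin> \<Union>C"
        then obtain X where "X \<in> C" "x \<in> X" "y \<notin> X" by blast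
        then show "wsub x y \<in> P" using memA by blast
      qed
      ultimately have "\<Union>C \<in> A" unfolding A_def by blast
      then show ?thesis by blast
    qed
  qed
  from Zorn_Lemma2[OF this] obtain M where MA: "M \<in> A"
    and Mmax: "\<And>X. X \<in> A \<Longrightarrow> M \<subseteq> X \<Longrightarrow> X = M" by blast
  have Mf: "is_filter M" and aM: "a \<in> M" and bM: "b \<notin> M"
    and MS: "\<And>x y. x \<in> M \<Longrightarrow> y \<notin> M \<Longrightarrow> wsub x y \<in> P"
    using MA unfolding A_def by auto
  have Mup: "\<And>u v. u \<in> M \<Longrightarrow> u \<le> v \<Longrightarrow> v \<in> M" using Mf unfolding is_filter_def by blast
  have Minf: "\<And>u v. u \<in> M \<Longrightarrow> v \<in> M \<Longrightarrow> inf u v \<in> M" using Mf unfolding is_filter_def by blast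
  have ext: "\<exists>m\<in>M. b \<in> F (inf m y)" if yM: "y \<notin> M" for y
  proof (rule ccontr)
    assume nb: "\<not> (\<exists>m\<in>M. b \<in> F (inf m y))"
    define M' where "M' = (\<Union>m\<in>M. F (inf m y))"
    have topM: "top \<in> M" using Mf unfolding is_filter_def by blast
    have sub: "M \<subseteq> M'"
    proof
      fix u assume "u \<in> M"
      have "inf u y \<in> F (inf u y)" by (rule Fself)
      then have "u \<in> F (inf u y)" using Ffil[of "inf u y"] unfolding is_filter_def
        by (meson inf.cobounded1)
      then show "u \<in> M'" unfolding M'_def using \<open>u \<in> M\<close> by blast
    qed
    have yM': "y \<in> M'"
    proof -
      have "inf top y \<in> F (inf top y)" by (rule Fself)
      then have "y \<in> F (inf top y)" by simp
      then show ?thesis unfolding M'_def using topM by blast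
    qed
    have "M' \<in> A"
      unfolding A_def mem_Collect_eq is_filter_def
    proof (intro conjI allI impI)
      show "top \<in> M'" using sub topM by blast
      show "a \<in> M'" using sub aM by blast
      show "b \<notin> M'" using nb unfolding M'_def by blast
    next
      fix u v assume "u \<in> M' \<and> u \<le> v"
      then show "v \<in> M'" unfolding M'_def using Ffil unfolding is_filter_def by blast
    next
      fix u v assume "u \<in> M' \<and> v \<in> M'"
      then obtain m1 m2 where m: "m1 \<in> M" "m2 \<in> M" "u \<in> F (inf m1 y)" "v \<in> F (inf m2 y)"
        unfolding M'_def by blast
      have "F (inf m1 y) \<subseteq> F (inf (inf m1 m2) y)" "F (inf m2 y) \<subseteq> F (inf (inf m1 m2) y)"
        by (rule Fanti, simp add: le_infI1)+
      then have "u \<in> F (inf (inf m1 m2) y)" "v \<in> F (inf (inf m1 m2) y)" using m by blast+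
      then have "inf u v \<in> F (inf (inf m1 m2) y)" using Ffil unfolding is_filter_def by blast
      then show "inf u v \<in> M'" unfolding M'_def using Minf[OF m(1,2)] by blast
    next
      fix u v assume "u \<in> M' \<and> v \<notin> M'"
      then obtain m where "m \<in> M" "u \<in> F (inf m y)" "v \<notin> F (inf m y)" unfolding M'_def by blast
      then show "wsub u v \<in> P" using Fclosed by blast
    qed
    from Mmax[OF this sub] yM yM' show False by blast
  qed
  have "is_prime_filter M"
    unfolding is_prime_filter_def
  proof (intro conjI allI impI Mf)
    show "bot \<notin> M" using bM Mup by (metis bot.extremum)
  next
    fix y z assume yz: "sup y z \<in> M"
    show "y \<in> M \<or> z \<in> M"
    proof (rule ccontr)
      assume "\<not> (y \<in> M \<or> z \<in> M)"
      then obtain m1 m2 where m: "m1 \<in> M" "m2 \<in> M" "b \<in> F (inf m1 y)" "b \<in> F (inf m2 z)"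
        using ext by blast
      define m where "m = inf m1 m2"
      have "F (inf m1 y) \<subseteq> F (inf m y)" "F (inf m2 z) \<subseteq> F (inf m z)"
        unfolding m_def by (rule Fanti, simp add: le_infI1)+
      then have "wsub (inf m y) b \<notin> P" "wsub (inf m z) b \<notin> P" using m unfolding F_def by blast+
      then have "wsub (sup (inf m y) (inf m z)) b \<notin> P"
        using pf_sup[OF P] wsub_sup_left by metis
      moreover have "sup (inf m y) (inf m z) = inf m (sup y z)" by (simp add: inf_sup_distrib1)
      moreover have "inf m (sup y z) \<in> M" unfolding m_def using m Minf yz by blast
      ultimately show False using MS bM by metis
    qed
  qed
  moreover have "S_rel P M" unfolding S_rel_def using P Mf MS by blast
  ultimately show "\<exists>Q. is_prime_filter Q \<and> S_rel P Q \<and> a \<in> Q \<and> b \<notin> Q" using aM bM by blast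
qed

end
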